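(* Let $M$ be a finite inverse monoid whose Green's relation $\mathscr{H}$ is trivial, and let $0$ be its zero. Let $\rho$ be a congruence of $M$ such that, for every $e\in E(M)$, if there exists $f\in E(M)$ with $f<e$ and $e\,\rho\, f$, then $e\,\rho\,0$. Then $\rho$ is a Rees congruence of $M$.
   Context: A finite inverse monoid with trivial $\mathscr{H}$-relation has a zero element. $E(M)$ is the set of idempotents of $M$, with natural partial order $e\leqslant f$ iff $ef=e=fe$; $f<e$ means $f\leqslant e$ and $f\neq e$. Green's relation $\mathscr{H}$: $a\mathscr{H}b$ iff $Ma=Mb$ and $aM=bM$. For an ideal $I$ of $M$ (i.e. $MIM\subseteq I$), the Rees congruence $\sim_I$ is defined by $a\sim_I b$ iff $a=b$ or $a,b\in I$. *)

theory Defs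
  imports Main
begin

definition inverse_monoid :: "'a::monoid_mult itself \<Rightarrow> bool" where
  "inverse_monoid _ \<longleftrightarrow> (\<forall>a::'a. \<exists>!b. a * b * a = a \<and> b * a * b = b)"

definition idems :: "'a::monoid_mult set" where
  "idems = {e. e * e = e}"

definition nat_le :: "'a::monoid_mult \<Rightarrow> 'a \<Rightarrow> bool" where
  "nat_le e f \<longleftrightarrow> e * f = e \<and> f * e = e"

definition nat_less :: "'a::monoid_mult \<Rightarrow> 'a \<Rightarrow> bool" where
  "nat_less e f \<longleftrightarrow> nat_le e f \<and> e \<noteq> f"

definition greenH :: "'a::monoid_mult \<Rightarrow> 'a \<Rightarrow> bool" where
  "greenH a b \<longleftrightarrow> (\<lambda>m. m * a) ` UNIV = (\<lambda>m. m * b) ` UNIV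
                 \<and> (\<lambda>m. a * m) ` UNIV = (\<lambda>m. b * m) ` UNIV"

definition is_zero :: "'a::monoid_mult \<Rightarrow> bool" where
  "is_zero z \<longleftrightarrow> (\<forall>x. z * x = z \<and> x * z = z)"

definition congruence :: "('a::monoid_mult \<times> 'a) set \<Rightarrow> bool" where
  "congruence \<rho> \<longleftrightarrow> equiv UNIV \<rho> \<and>
     (\<forall>a b c. (a, b) \<in> \<rho> \<longrightarrow> (c * a, c * b) \<in> \<rho> \<and> (a * c, b * c) \<in> \<rho>)"

definition is_ideal :: "'a::monoid_mult set \<Rightarrow> bool" where
  "is_ideal I \<longleftrightarrow> (\<forall>m x n. x \<in> I \<longrightarrow> m * x * n \<in> I)"

definition rees_cong :: "'a::monoid_mult set \<Rightarrow> ('a \<times> 'a) set" where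
  "rees_cong I = {(a, b). a = b \<or> (a \<in> I \<and> b \<in> I)}"

end

theory Submission
  imports Defs
begin

definition minv :: "'a::monoid_mult \<Rightarrow> 'a" where
  "minv a = (THE b. a * b * a = a \<and> b * a * b = b)"

lemma minv_props:
  assumes "inverse_monoid TYPE('a::monoid_mult)"
  shows "a * minv a * a = a" "minv a * a * minv a = minv (a::'a)"
proof -
  have "\<exists>!b. a * b * a = a \<and> b * a * b = b" using assms unfolding inverse_monoid_def by blast
  from theI'[OF this] show "a * minv a * a = a" "minv a * a * minv a = minv (a::'a)"
    unfolding minv_def by auto
qed

lemma minv_unique:
  assumes "inverse_monoid TYPE('a::monoid_mult)" "a * b * a = a" "b * a * b = (b::'a)"
  shows "b = minv a"
proof -
  have "\<exists>!b. a * b * a = a \<and> b * a * b = b" using assms unfolding inverse_monoid_def by blast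
  from the1_equality[OF this] show ?thesis using assms unfolding minv_def by auto
qed

lemma idem_prod:
  assumes im: "inverse_monoid TYPE('a::monoid_mult)" and e: "e * e = e" and f: "f * f = (f::'a)"
  shows "(e * f) * (e * f) = e * f"
proof -
  define x where "x = minv (e * f)"
  have x1: "e * f * x * (e * f) = e * f" and x2: "x * (e * f) * x = x"
    using minv_props[OF im, of "e*f"] unfolding x_def by auto
  have "e * f * (f * x * e) * (e * f) = e * (f * f) * x * (e * e) * f" by (simp add: mult.assoc)
  also have "\<dots> = e * f" using e f x1 by (simp add: mult.assoc)
  finally have y1: "e * f * (f * x * e) * (e * f) = e * f" .
  have "f * x * e * (e * f) * (f * x * e) = f * (x * (e * e) * (f * f) * x) * e" by (simp add: mult.assoc)
  also have "\<dots> = f * x * e" using e f x2 by (simp add: mult.assoc)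
  finally have y2: "f * x * e * (e * f) * (f * x * e) = f * x * e" .
  have xe: "f * x * e = x" using minv_unique[OF im y1 y2] unfolding x_def .
  have xx: "x * x = x"
  proof -
    have "x * x = (f * x * e) * (f * x * e)" using xe by simp
    also have "\<dots> = f * (x * (e * f) * x) * e" by (simp add: mult.assoc)
    also have "\<dots> = x" using x2 xe by (simp add: mult.assoc)
    finally show ?thesis .
  qed
  have a: "e * f = minv x" using minv_unique[OF im, of x "e*f"] x1 x2 by (simp add: mult.assoc)
  have b: "x = minv x" using minv_unique[OF im, of x x] xx by simp
  have "e * f = x" using a b by simp
  then show ?thesis using xx by simp
qed

lemma idem_comm:
  assumes im: "inverse_monoid TYPE('a::monoid_mult)" and e: "e * e = e" and f: "f * f = (f::'a)"
  shows "e * f = f * e"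
proof -
  have ef: "(e * f) * (e * f) = e * f" by (rule idem_prod[OF im e f])
  have fe: "(f * e) * (f * e) = f * e" by (rule idem_prod[OF im f e])
  have "e * f * (f * e) * (e * f) = e * (f * f) * (e * e) * f" by (simp add: mult.assoc)
  also have "\<dots> = (e * f) * (e * f)" using e f by (simp add: mult.assoc)
  finally have 1: "e * f * (f * e) * (e * f) = e * f" using ef by simp
  have "f * e * (e * f) * (f * e) = f * (e * e) * (f * f) * e" by (simp add: mult.assoc)
  also have "\<dots> = (f * e) * (f * e)" using e f by (simp add: mult.assoc)
  finally have 2: "f * e * (e * f) * (f * e) = f * e" using fe by simp
  have "f * e = minv (e * f)" using minv_unique[OF im 1 2] .
  moreover have "e * f = minv (e * f)" using minv_unique[OF im, of "e*f" "e*f"] ef by simp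
  ultimately show ?thesis by simp
qed

lemma idem_la:
  assumes im: "inverse_monoid TYPE('a::monoid_mult)"
  shows "(minv a * a) * (minv a * a) = minv a * (a::'a)" "(a * minv a) * (a * minv a) = a * minv a"
proof -
  have "(minv a * a) * (minv a * a) = (minv a * a * minv a) * a" by (simp add: mult.assoc)
  then show "(minv a * a) * (minv a * a) = minv a * (a::'a)" using minv_props(2)[OF im] by simp
  have "(a * minv a) * (a * minv a) = (a * minv a * a) * minv a" by (simp add: mult.assoc)
  then show "(a * minv a) * (a * minv a) = a * minv a" using minv_props(1)[OF im] by simp
qed

lemma cong_props:
  assumes "congruence \<rho>"
  shows cong_refl: "(x, x) \<in> \<rho>"
    and cong_sym: "(x, y) \<in> \<rho> \<Longrightarrow> (y, x) \<in> \<rho>"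
    and cong_trans: "(x, y) \<in> \<rho> \<Longrightarrow> (y, w) \<in> \<rho> \<Longrightarrow> (x, w) \<in> \<rho>"
    and cong_mult: "(x, y) \<in> \<rho> \<Longrightarrow> (u * x * v, u * y * v) \<in> \<rho>"
  using assms unfolding congruence_def equiv_def
  by (auto dest: refl_onD symD elim: transE)

lemma cong_inv_A:
  assumes im: "inverse_monoid TYPE('a::monoid_mult)" and c: "congruence \<rho>"
    and ab: "(a, b) \<in> \<rho>"
  shows "(minv a, minv b * b * minv (a::'a)) \<in> \<rho>"
proof -
  note P = minv_props[OF im]
  have ba: "(b, a) \<in> \<rho>" using cong_sym[OF c ab] .
  have 1: "(b * minv b * b, a * minv b * b) \<in> \<rho>" using cong_mult[OF c ba, of 1 "minv b * b"] by (simp add: mult.assoc)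
  have 2: "(a * minv b * b, a * minv b * a) \<in> \<rho>" using cong_mult[OF c ba, of "a * minv b" 1] by (simp add: mult.assoc)
  have b3: "(b, a * minv b * a) \<in> \<rho>" using cong_trans[OF c 1 2] P(1)[of b] by simp
  have 3: "(a, a * minv b * a) \<in> \<rho>" using cong_trans[OF c ab b3] .
  have 4: "(minv a * a * minv a, minv a * (a * minv b * a) * minv a) \<in> \<rho>" using cong_mult[OF c 3] .
  have 5: "(minv a * a * (minv b * a) * minv a, minv a * a * (minv b * b) * minv a) \<in> \<rho>"
    using cong_mult[OF c ab, of "minv a * a * minv b" "minv a"] by (simp add: mult.assoc)
  have e1: "(minv a * a) * (minv a * a) = minv a * a" using idem_la[OF im] by simp
  have e2: "(minv b * b) * (minv b * b) = minv b * b" using idem_la[OF im] by simp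
  have cm: "minv a * a * (minv b * b) = minv b * b * (minv a * a)" using idem_comm[OF im e1 e2] .
  have "minv a * a * (minv b * b) * minv a = minv b * b * (minv a * a * minv a)" using cm by (simp add: mult.assoc)
  also have "\<dots> = minv b * b * minv a" using P(2)[of a] by simp
  finally have 6: "minv a * a * (minv b * b) * minv a = minv b * b * minv a" .
  have "(minv a, minv a * a * (minv b * a) * minv a) \<in> \<rho>" using 4 P(2)[of a] by (simp add: mult.assoc)
  from cong_trans[OF c this 5] show ?thesis using 6 by simp
qed

lemma cong_inv_B:
  assumes im: "inverse_monoid TYPE('a::monoid_mult)" and c: "congruence \<rho>"
    and ab: "(a, b) \<in> \<rho>"
  shows "(minv a, minv a * b * minv (b::'a)) \<in> \<rho>"
proof -
  note P = minv_props[OF im]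
  have ba: "(b, a) \<in> \<rho>" using cong_sym[OF c ab] .
  have 1: "(b * minv b * b, a * minv b * b) \<in> \<rho>" using cong_mult[OF c ba, of 1 "minv b * b"] by (simp add: mult.assoc)
  have 2: "(a * minv b * b, a * minv b * a) \<in> \<rho>" using cong_mult[OF c ba, of "a * minv b" 1] by (simp add: mult.assoc)
  have b3: "(b, a * minv b * a) \<in> \<rho>" using cong_trans[OF c 1 2] P(1)[of b] by simp
  have 3: "(a, a * minv b * a) \<in> \<rho>" using cong_trans[OF c ab b3] .
  have 4: "(minv a * a * minv a, minv a * (a * minv b * a) * minv a) \<in> \<rho>" using cong_mult[OF c 3] .
  have 5: "(minv a * (a * minv b) * (a * minv a), minv a * (b * minv b) * (a * minv a)) \<in> \<rho>"
    using cong_mult[OF c ab, of "minv a" "minv b * (a * minv a)"] by (simp add: mult.assoc)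
  have e1: "(a * minv a) * (a * minv a) = a * minv a" using idem_la[OF im] by simp
  have e2: "(b * minv b) * (b * minv b) = b * minv b" using idem_la[OF im] by simp
  have cm: "b * minv b * (a * minv a) = a * minv a * (b * minv b)" using idem_comm[OF im e2 e1] .
  have "minv a * (b * minv b) * (a * minv a) = (minv a * a * minv a) * (b * minv b)" using cm by (simp add: mult.assoc)
  also have "\<dots> = minv a * b * minv b" using P(2)[of a] by (simp add: mult.assoc)
  finally have 6: "minv a * (b * minv b) * (a * minv a) = minv a * b * minv b" .
  have "(minv a, minv a * (a * minv b) * (a * minv a)) \<in> \<rho>" using 4 P(2)[of a] by (simp add: mult.assoc)
  from cong_trans[OF c this 5] show ?thesis using 6 by simp
qed

lemma cong_inv:
  assumes im: "inverse_monoid TYPE('a::monoid_mult)" and c: "congruence \<rho>"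
    and ab: "(a, b) \<in> \<rho>"
  shows "(minv a, minv (b::'a)) \<in> \<rho>"
proof -
  have ba: "(b, a) \<in> \<rho>" using cong_sym[OF c ab] .
  have 1: "(minv a, minv b * b * minv a) \<in> \<rho>" by (rule cong_inv_A[OF im c ab])
  have 2: "(minv b, minv b * a * minv a) \<in> \<rho>" by (rule cong_inv_B[OF im c ba])
  have 3: "(minv b * b * minv a, minv b * a * minv a) \<in> \<rho>" by (rule cong_mult[OF c ba])
  show ?thesis using cong_trans[OF c 1 cong_trans[OF c 3 cong_sym[OF c 2]]] .
qed

lemma greenH_I:
  assumes im: "inverse_monoid TYPE('a::monoid_mult)"
    and r: "a * minv a = b * minv (b::'a)" and l: "minv a * a = minv b * b"
  shows "greenH a b"
proof -
  note P = minv_props[OF im]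
  have 1: "m * a = (m * a * minv b) * b" for m
  proof -
    have "m * a = m * (a * minv a * a)" using P(1)[of a] by simp
    also have "\<dots> = m * a * (minv a * a)" by (simp add: mult.assoc)
    also have "\<dots> = m * a * (minv b * b)" using l by simp
    finally show ?thesis by (metis mult.assoc)
  qed
  have 2: "m * b = (m * b * minv a) * a" for m
  proof -
    have "m * b = m * (b * minv b * b)" using P(1)[of b] by simp
    also have "\<dots> = m * b * (minv b * b)" by (simp add: mult.assoc)
    also have "\<dots> = m * b * (minv a * a)" using l by simp
    finally show ?thesis by (metis mult.assoc)
  qed
  have 3: "a * m = b * (minv b * a * m)" for m
  proof -
    have "a * m = (a * minv a * a) * m" using P(1)[of a] by simp
    also have "\<dots> = (b * minv b) * a * m" using r by simp
    finally show ?thesis by (metis mult.assoc)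
  qed
  have 4: "b * m = a * (minv a * b * m)" for m
  proof -
    have "b * m = (b * minv b * b) * m" using P(1)[of b] by simp
    also have "\<dots> = (a * minv a) * b * m" using r by simp
    finally show ?thesis by (metis mult.assoc)
  qed
  show ?thesis unfolding greenH_def
  proof (intro conjI set_eqI iffI)
    fix x assume "x \<in> range (\<lambda>m. m * a)" then obtain m where "x = m * a" by auto
    then show "x \<in> range (\<lambda>m. m * b)" using 1[of m] by blast
  next
    fix x assume "x \<in> range (\<lambda>m. m * b)" then obtain m where "x = m * b" by auto
    then show "x \<in> range (\<lambda>m. m * a)" using 2[of m] by blast
  next
    fix x assume "x \<in> range (\<lambda>m. a * m)" then obtain m where "x = a * m" by auto
    then show "x \<in> range (\<lambda>m. b * m)" using 3[of m] by blast
  next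
    fix x assume "x \<in> range (\<lambda>m. b * m)" then obtain m where "x = b * m" by auto
    then show "x \<in> range (\<lambda>m. a * m)" using 4[of m] by blast
  qed
qed

lemma idem_case:
  assumes im: "inverse_monoid TYPE('a::monoid_mult)" and c: "congruence \<rho>"
    and H: "\<forall>e\<in>idems. (\<exists>f\<in>idems. nat_less f e \<and> (e, f) \<in> \<rho>) \<longrightarrow> (e, z) \<in> \<rho>"
    and e: "e * e = e" and f: "f * f = (f::'a)" and ef: "(e, f) \<in> \<rho>"
  shows "e = f \<or> (e, z) \<in> \<rho> \<or> (f, z) \<in> \<rho>"
proof -
  have cm: "e * f = f * e" by (rule idem_comm[OF im e f])
  have pi: "e * f \<in> idems" using idem_prod[OF im e f] unfolding idems_def by simp
  have ei: "e \<in> idems" "f \<in> idems" using e f unfolding idems_def by auto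
  have r1: "(e, e * f) \<in> \<rho>" using cong_mult[OF c ef, of e 1] e by simp
  have r2: "(f, e * f) \<in> \<rho>" using cong_mult[OF c cong_sym[OF c ef], of f 1] f cm by simp
  have le1: "nat_le (e * f) e" unfolding nat_le_def using e cm
    by (metis mult.assoc)
  have le2: "nat_le (e * f) f" unfolding nat_le_def using f cm
    by (metis mult.assoc)
  show ?thesis
  proof (cases "e * f = e")
    case False
    then have "(e, z) \<in> \<rho>" using H ei(1) pi le1 r1 unfolding nat_less_def by blast
    then show ?thesis by simp
  next
    case T1: True
    show ?thesis
    proof (cases "e * f = f")
      case False
      then have "(f, z) \<in> \<rho>" using H ei(2) pi le2 r2 unfolding nat_less_def by blast
      then show ?thesis by simp
    next
      case True
      then show ?thesis using T1 by simp
    qed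
  qed
qed

theorem lemma3p1:
  fixes \<rho> :: "('a::{monoid_mult, finite} \<times> 'a) set" and z :: 'a
  assumes "inverse_monoid TYPE('a)"
    and "\<forall>a b::'a. greenH a b \<longrightarrow> a = b"
    and "is_zero z"
    and "congruence \<rho>"
    and "\<forall>e\<in>idems. (\<exists>f\<in>idems. nat_less f e \<and> (e, f) \<in> \<rho>) \<longrightarrow> (e, z) \<in> \<rho>"
  shows "\<exists>I. is_ideal I \<and> \<rho> = rees_cong I"
proof -
  note im = assms(1) and c = assms(4) and H = assms(5)
  note P = minv_props[OF im]
  have zl: "z * x = z" and zr: "x * z = z" for x using assms(3) unfolding is_zero_def by auto
  define I where "I = {a. (a, z) \<in> \<rho>}"
  have ideal: "is_ideal I" unfolding is_ideal_def I_def
  proof (intro allI impI, simp)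
    fix m x n assume "(x, z) \<in> \<rho>"
    from cong_mult[OF c this, of m n] show "(m * x * n, z) \<in> \<rho>" using zl zr by simp
  qed
  have key: "(a, z) \<in> \<rho> \<and> (b, z) \<in> \<rho>" if ab: "(a, b) \<in> \<rho>" and ne: "a \<noteq> b" for a b
  proof -
    have ba: "(b, a) \<in> \<rho>" using cong_sym[OF c ab] .
    have fromA: "(a, z) \<in> \<rho> \<and> (b, z) \<in> \<rho>" if az: "(a, z) \<in> \<rho>"
      using az cong_trans[OF c ba az] by simp
    have fromB: "(a, z) \<in> \<rho> \<and> (b, z) \<in> \<rho>" if bz: "(b, z) \<in> \<rho>"
      using bz cong_trans[OF c ab bz] by simp
    have ii: "(minv a, minv b) \<in> \<rho>" by (rule cong_inv[OF im c ab])
    have R1: "(a * minv a, b * minv a) \<in> \<rho>" using cong_mult[OF c ab, of 1 "minv a"] by simp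
    have R2: "(b * minv a, b * minv b) \<in> \<rho>" using cong_mult[OF c ii, of b 1] by simp
    have R: "(a * minv a, b * minv b) \<in> \<rho>" using cong_trans[OF c R1 R2] .
    have L1: "(minv a * a, minv b * a) \<in> \<rho>" using cong_mult[OF c ii, of 1 a] by simp
    have L2: "(minv b * a, minv b * b) \<in> \<rho>" using cong_mult[OF c ab, of "minv b" 1] by simp
    have L: "(minv a * a, minv b * b) \<in> \<rho>" using cong_trans[OF c L1 L2] .
    have liftR: "(a, z) \<in> \<rho>" if "(a * minv a, z) \<in> \<rho>" for a
      using cong_mult[OF c that, of 1 a] P(1)[of a] zl by (simp add: mult.assoc)
    have liftL: "(a, z) \<in> \<rho>" if "(minv a * a, z) \<in> \<rho>" for a
      using cong_mult[OF c that, of a 1] P(1)[of a] zr by (simp add: mult.assoc)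
    have c1: "a * minv a = b * minv b \<or> (a * minv a, z) \<in> \<rho> \<or> (b * minv b, z) \<in> \<rho>"
      by (rule idem_case[OF im c H idem_la(2)[OF im] idem_la(2)[OF im] R])
    have c2: "minv a * a = minv b * b \<or> (minv a * a, z) \<in> \<rho> \<or> (minv b * b, z) \<in> \<rho>"
      by (rule idem_case[OF im c H idem_la(1)[OF im] idem_la(1)[OF im] L])
    show ?thesis
    proof (cases "a * minv a = b * minv b \<and> minv a * a = minv b * b")
      case True
      then have "greenH a b" using greenH_I[OF im] by blast
      then have False using assms(2) ne by blast
      then show ?thesis ..
    next
      case False
      then show ?thesis using c1 c2 liftR liftL fromA fromB by blast
    qed
  qed
  have "\<rho> = rees_cong I"
  proof (intro set_eqI iffI)
    fix p assume "p \<in> \<rho>"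
    then obtain a b where p: "p = (a, b)" "(a, b) \<in> \<rho>" by (cases p) auto
    then show "p \<in> rees_cong I" using key[of a b] unfolding rees_cong_def I_def by auto
  next
    fix p assume "p \<in> rees_cong I"
    then obtain a b where p: "p = (a, b)" "a = b \<or> (a \<in> I \<and> b \<in> I)" unfolding rees_cong_def by auto
    then show "p \<in> \<rho>" unfolding I_def
      using cong_refl[OF c] cong_trans[OF c _ cong_sym[OF c]] by blast
  qed
  then show ?thesis using ideal by blast
qed

end
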